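(* Let $\mathcal{H}=(\mathcal{V},\mathcal{E})$ be a connected Sperner hypergraph with $|\mathcal{E}|\ge 2$. (i) If $F(\mathcal{H})\neq\emptyset$, then $(\lambda-1)^2$ divides $P(\mathcal{H},\lambda)$ if and only if $|F(\mathcal{H})|=1$. (ii) Suppose $F(\mathcal{H})=\emptyset$ and there are a vertex $w$ and two proper subsets $\mathcal{V}_1,\mathcal{V}_2$ of $\mathcal{V}$ with $\mathcal{V}_1\cup\mathcal{V}_2=\mathcal{V}$, $\mathcal{V}_1\cap\mathcal{V}_2=\{w\}$, and such that every $e\in\mathcal{E}$ satisfies $w\in e$ or $e\subseteq\mathcal{V}_i$ for some $i\in\{1,2\}$. Then $(\lambda-1)^2$ divides $P(\mathcal{H},\lambda)$ if and only if one of the following holds: (a) $\mathcal{V}_1\notin\mathcal{I}(\mathcal{H})$ and $\mathcal{V}_2\notin\mathcal{I}(\mathcal{H})$; (b) for some $i\in\{1,2\}$, $\mathcal{V}_i\in\mathcal{I}(\mathcal{H})$, $\mathcal{V}_{3-i}\notin\mathcal{I}(\mathcal{H})$, and $(\lambda-1)^2$ divides $P(\mathcal{H}\cdot\mathcal{V}_i,\lambda)$.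
   Context: A hypergraph $\mathcal{H}=(\mathcal{V},\mathcal{E})$ consists of a finite vertex set $\mathcal{V}$ and a set $\mathcal{E}$ of subsets of $\mathcal{V}$, each of size at least $1$, called edges. For a positive integer $\lambda$, a weak proper $\lambda$-colouring of $\mathcal{H}$ is a map $\phi:\mathcal{V}\to\{1,\dots,\lambda\}$ such that $|\{\phi(v):v\in e\}|>1$ for every $e\in\mathcal{E}$. $P(\mathcal{H},\lambda)$ denotes the number of weak proper $\lambda$-colourings; it is a polynomial in $\lambda$. $\mathcal{H}$ is connected if for any two vertices $v_1,v_2$ there is a sequence of edges $e_0,\dots,e_k$ with $v_1\in e_0$, $v_2\in e_k$, $e_i\cap e_{i+1}\ne\emptyset$. $\mathcal{H}$ is Sperner if $e_1\not\subseteq e_2$ for all distinct edges $e_1,e_2$. $F(\mathcal{H})$ is the set of vertices lying in every edge of $\mathcal{H}$. For $\mathcal{V}_0\subseteq\mathcal{V}$, $\mathcal{H}[\mathcal{V}_0]$ is the hypergraph with vertex set $\mathcal{V}_0$ and edge set $\{e\in\mathcal{E}:e\subseteq\mathcal{V}_0\}$, and $\mathcal{I}(\mathcal{H})$ is the set of subsets $\mathcal{V}_0\subseteq\mathcal{V}$ such that $\mathcal{H}[\mathcal{V}_0]$ has no edges. $\mathcal{H}\cdot\mathcal{V}_0$ is obtained by identifying all vertices of $\mathcal{V}_0$ into one new vertex $w'$: its vertex set is $(\mathcal{V}\setminus\mathcal{V}_0)\cup\{w'\}$ and its edge set is $\{e\in\mathcal{E}:e\cap\mathcal{V}_0=\emptyset\}\cup\{(e\setminus\mathcal{V}_0)\cup\{w'\}:e\cap\mathcal{V}_0\ne\emptyset\}$.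 *)

theory Defs
  imports Main "HOL-Library.FuncSet" "HOL-Computational_Algebra.Polynomial"
begin

definition hypergraph :: "'a set \<Rightarrow> 'a set set \<Rightarrow> bool" where
  "hypergraph V E \<longleftrightarrow> finite V \<and> (\<forall>e\<in>E. e \<subseteq> V \<and> e \<noteq> {})"

definition weak_proper_colourings :: "'a set \<Rightarrow> 'a set set \<Rightarrow> nat \<Rightarrow> ('a \<Rightarrow> nat) set" where
  "weak_proper_colourings V E lam =
     {\<phi> \<in> V \<rightarrow>\<^sub>E {1..lam}. \<forall>e\<in>E. card (\<phi> ` e) > 1}"

definition chrom_count :: "'a set \<Rightarrow> 'a set set \<Rightarrow> nat \<Rightarrow> nat" where
  "chrom_count V E lam = card (weak_proper_colourings V E lam)"

definition chrom_poly :: "'a set \<Rightarrow> 'a set set \<Rightarrow> int poly" where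
  "chrom_poly V E = (THE p. \<forall>n::nat. poly p (of_nat n) = of_nat (chrom_count V E n))"

definition hg_connected :: "'a set \<Rightarrow> 'a set set \<Rightarrow> bool" where
  "hg_connected V E \<longleftrightarrow>
     (\<forall>v1\<in>V. \<forall>v2\<in>V. \<exists>es. es \<noteq> [] \<and> set es \<subseteq> E \<and> v1 \<in> hd es \<and> v2 \<in> last es \<and>
        (\<forall>i. Suc i < length es \<longrightarrow> es ! i \<inter> es ! Suc i \<noteq> {}))"

definition sperner :: "'a set set \<Rightarrow> bool" where
  "sperner E \<longleftrightarrow> (\<forall>e1\<in>E. \<forall>e2\<in>E. e1 \<noteq> e2 \<longrightarrow> \<not> e1 \<subseteq> e2)"

definition core :: "'a set \<Rightarrow> 'a set set \<Rightarrow> 'a set" where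
  "core V E = {v \<in> V. \<forall>e\<in>E. v \<in> e}"

definition induced_edges :: "'a set set \<Rightarrow> 'a set \<Rightarrow> 'a set set" where
  "induced_edges E V0 = {e \<in> E. e \<subseteq> V0}"

definition indep_sets :: "'a set \<Rightarrow> 'a set set \<Rightarrow> 'a set set" where
  "indep_sets V E = {V0. V0 \<subseteq> V \<and> induced_edges E V0 = {}}"

text \<open>H . V0: identify all vertices of V0 into one new vertex (None); old vertices v become Some v.\<close>
definition contract_V :: "'a set \<Rightarrow> 'a set \<Rightarrow> 'a option set" where
  "contract_V V V0 = Some ` (V - V0) \<union> {None}"

definition contract_E :: "'a set set \<Rightarrow> 'a set \<Rightarrow> 'a option set set" where
  "contract_E E V0 = {Some ` e | e. e \<in> E \<and> e \<inter> V0 = {}}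
                    \<union> {Some ` (e - V0) \<union> {None} | e. e \<in> E \<and> e \<inter> V0 \<noteq> {}}"

end

theory Submission imports Defs begin

definition wpc :: "'a set \<Rightarrow> 'a set set \<Rightarrow> 'c set \<Rightarrow> ('a \<Rightarrow> 'c) set" where
  "wpc V E C = {\<phi> \<in> V \<rightarrow>\<^sub>E C. \<forall>e\<in>E. 1 < card (\<phi> ` e)}"

lemma chrom_count_wpc: "chrom_count V E n = card (wpc V E {1..n})"
  by (simp add: chrom_count_def weak_proper_colourings_def wpc_def)

lemma wpc_map_ok:
  assumes k: "bij_betw k X Y" and ph: "\<phi> \<in> wpc V E X" and EV: "\<forall>e\<in>E. e \<subseteq> V"
  shows "restrict (k \<circ> \<phi>) V \<in> wpc V E Y"
proof -
  have pi: "\<phi> \<in> V \<rightarrow>\<^sub>E X" and pr: "\<forall>e\<in>E. 1 < card (\<phi> ` e)" using ph by (auto simp: wpc_def)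
  have "restrict (k \<circ> \<phi>) V \<in> V \<rightarrow>\<^sub>E Y" using pi k by (auto simp: bij_betw_def)
  moreover have "1 < card (restrict (k \<circ> \<phi>) V ` e)" if e: "e \<in> E" for e
  proof -
    have "restrict (k \<circ> \<phi>) V ` e = k ` (\<phi> ` e)" using EV e by auto
    moreover have "\<phi> ` e \<subseteq> X" using pi EV e by auto
    then have "inj_on k (\<phi> ` e)" using k by (meson bij_betw_def inj_on_subset)
    ultimately show ?thesis using pr e by (simp add: card_image)
  qed
  ultimately show ?thesis by (simp add: wpc_def)
qed

lemma wpc_card_eq:
  assumes C: "finite C" "finite D" "card C = card D" and EV: "\<forall>e\<in>E. e \<subseteq> V"
  shows "card (wpc V E C) = card (wpc V E D)"
proof -
  obtain h where h: "bij_betw h C D" using finite_same_card_bij[OF C] by blast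
  define g where "g = inv_into C h"
  have g: "bij_betw g D C" unfolding g_def using h by (rule bij_betw_inv_into)
  have gh: "\<And>x. x \<in> C \<Longrightarrow> g (h x) = x" unfolding g_def using h
    by (simp add: bij_betw_def)
  have hg: "\<And>y. y \<in> D \<Longrightarrow> h (g y) = y" unfolding g_def using h
    by (simp add: bij_betw_def f_inv_into_f)
  have "bij_betw (\<lambda>\<phi>. restrict (h \<circ> \<phi>) V) (wpc V E C) (wpc V E D)"
  proof (rule bij_betw_byWitness[where f'="\<lambda>\<phi>. restrict (g \<circ> \<phi>) V"])
    show "\<forall>a\<in>wpc V E C. restrict (g \<circ> restrict (h \<circ> a) V) V = a"
      using gh by (auto simp: wpc_def restrict_def PiE_def Pi_def extensional_def fun_eq_iff)
    show "\<forall>a\<in>wpc V E D. restrict (h \<circ> restrict (g \<circ> a) V) V = a"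
      using hg by (auto simp: wpc_def restrict_def PiE_def Pi_def extensional_def fun_eq_iff)
    show "(\<lambda>\<phi>. restrict (h \<circ> \<phi>) V) ` wpc V E C \<subseteq> wpc V E D" using wpc_map_ok[OF h _ EV] by auto
    show "(\<lambda>\<phi>. restrict (g \<circ> \<phi>) V) ` wpc V E D \<subseteq> wpc V E C" using wpc_map_ok[OF g _ EV] by auto
  qed
  then show ?thesis by (rule bij_betw_same_card)
qed

lemma wpc_count:
  assumes "finite C" "\<forall>e\<in>E. e \<subseteq> V"
  shows "card (wpc V E C) = chrom_count V E (card C)"
  unfolding chrom_count_wpc using wpc_card_eq[OF assms(1) _ _ assms(2), of "{1..card C}"] by simp


lemma induced_sub: "e \<in> induced_edges E X \<Longrightarrow> e \<subseteq> X"
  by (simp add: induced_edges_def)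

lemma fibre_card:
  assumes hyp: "hypergraph V E" and wA: "w \<in> A" and AS: "A \<subseteq> S" and SV: "S \<subseteq> V"
    and C: "finite C" "c \<in> C" and ind: "induced_edges E S = {}"
  shows "card {\<phi> \<in> wpc V E C. (\<forall>a\<in>A. \<phi> a = \<phi> w) \<and> \<phi> w = c \<and> {v\<in>V. \<phi> v = c} = S}
         = chrom_count (V-S) (induced_edges E (V-S)) (card C - 1)"
proof -
  define F where "F = {\<phi> \<in> wpc V E C. (\<forall>a\<in>A. \<phi> a = \<phi> w) \<and> \<phi> w = c \<and> {v\<in>V. \<phi> v = c} = S}"
  define G where "G = wpc (V-S) (induced_edges E (V-S)) (C-{c})"
  have EV: "\<forall>e\<in>E. e \<subseteq> V \<and> e \<noteq> {}" and finV: "finite V" using hyp by (auto simp: hypergraph_def)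
  have wS: "w \<in> S" using wA AS by auto
  have noedge: "\<not> e \<subseteq> S" if "e \<in> E" for e using ind that by (auto simp: induced_edges_def)
  have "bij_betw (\<lambda>\<phi>. restrict \<phi> (V-S)) F G"
  proof (rule bij_betw_byWitness[where f'="\<lambda>\<psi> v. if v \<in> S then c else \<psi> v"])
    show "\<forall>\<phi>\<in>F. (\<lambda>v. if v \<in> S then c else restrict \<phi> (V-S) v) = \<phi>"
    proof
      fix \<phi> assume "\<phi> \<in> F"
      then have pi: "\<phi> \<in> V \<rightarrow>\<^sub>E C" and Sd: "{v\<in>V. \<phi> v = c} = S" by (auto simp: F_def wpc_def)
      show "(\<lambda>v. if v \<in> S then c else restrict \<phi> (V-S) v) = \<phi>"
      proof
        fix v show "(if v \<in> S then c else restrict \<phi> (V-S) v) = \<phi> v"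
          using pi Sd SV by (cases "v \<in> V") (auto simp: PiE_def extensional_def)
      qed
    qed
    show "\<forall>\<psi>\<in>G. restrict (\<lambda>v. if v \<in> S then c else \<psi> v) (V-S) = \<psi>"
    proof
      fix \<psi> assume "\<psi> \<in> G"
      then have pi: "\<psi> \<in> (V-S) \<rightarrow>\<^sub>E (C-{c})" by (auto simp: G_def wpc_def)
      show "restrict (\<lambda>v. if v \<in> S then c else \<psi> v) (V-S) = \<psi>"
      proof
        fix v show "restrict (\<lambda>v. if v \<in> S then c else \<psi> v) (V-S) v = \<psi> v"
          using pi by (cases "v \<in> V - S") (auto simp: PiE_def extensional_def)
      qed
    qed
    show "(\<lambda>\<phi>. restrict \<phi> (V-S)) ` F \<subseteq> G"
    proof clarify
      fix \<phi> assume "\<phi> \<in> F"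
      then have pi: "\<phi> \<in> V \<rightarrow>\<^sub>E C" and Sd: "{v\<in>V. \<phi> v = c} = S" and pr: "\<forall>e\<in>E. 1 < card (\<phi> ` e)"
        by (auto simp: F_def wpc_def)
      have "restrict \<phi> (V-S) \<in> (V-S) \<rightarrow>\<^sub>E (C-{c})" using pi Sd by auto
      moreover have "1 < card (restrict \<phi> (V-S) ` e)" if "e \<in> induced_edges E (V-S)" for e
      proof -
        have e: "e \<in> E" "e \<subseteq> V - S" using that by (auto simp: induced_edges_def)
        then have "restrict \<phi> (V-S) ` e = \<phi> ` e" by auto
        then show ?thesis using pr e by auto
      qed
      ultimately show "restrict \<phi> (V-S) \<in> G" by (simp add: G_def wpc_def)
    qed
    show "(\<lambda>\<psi> v. if v \<in> S then c else \<psi> v) ` G \<subseteq> F"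
    proof clarify
      fix \<psi> assume "\<psi> \<in> G"
      then have pi: "\<psi> \<in> (V-S) \<rightarrow>\<^sub>E (C-{c})" and pr: "\<forall>e\<in>induced_edges E (V-S). 1 < card (\<psi> ` e)"
        by (auto simp: G_def wpc_def)
      define \<phi> where "\<phi> = (\<lambda>v. if v \<in> S then c else \<psi> v)"
      have pi2: "\<phi> \<in> V \<rightarrow>\<^sub>E C" using pi SV C by (auto simp: \<phi>_def PiE_def Pi_def extensional_def)
      have "1 < card (\<phi> ` e)" if e: "e \<in> E" for e
      proof (cases "e \<inter> S = {}")
        case True
        then have "e \<in> induced_edges E (V-S)" using e EV by (auto simp: induced_edges_def)
        moreover have "\<phi> ` e = \<psi> ` e" using True by (auto simp: \<phi>_def)
        ultimately show ?thesis using pr by auto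
      next
        case False
        then obtain a where a: "a \<in> e" "a \<in> S" by auto
        obtain b where b: "b \<in> e" "b \<notin> S" using noedge[OF e] by auto
        have bV: "b \<in> V - S" using b e EV by auto
        have "\<phi> a \<noteq> \<phi> b" using a b pi bV by (auto simp: \<phi>_def)
        moreover have "finite (\<phi> ` e)" using e EV finV by (meson finite_imageI finite_subset)
        moreover have "{\<phi> a, \<phi> b} \<subseteq> \<phi> ` e" using a b by auto
        ultimately show ?thesis using card_mono[of "\<phi> ` e" "{\<phi> a, \<phi> b}"] by auto
      qed
      moreover have "\<forall>a\<in>A. \<phi> a = \<phi> w" "\<phi> w = c" using AS wS by (auto simp: \<phi>_def)
      moreover have "{v\<in>V. \<phi> v = c} = S" using SV pi by (auto simp: \<phi>_def PiE_def Pi_def)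
      ultimately show "(\<lambda>v. if v \<in> S then c else \<psi> v) \<in> F" using pi2
        by (simp add: F_def wpc_def \<phi>_def)
    qed
  qed
  then have "card F = card G" by (rule bij_betw_same_card)
  also have "card G = chrom_count (V-S) (induced_edges E (V-S)) (card (C-{c}))"
    unfolding G_def by (rule wpc_count) (use C in \<open>auto simp: induced_edges_def\<close>)
  finally show ?thesis using C by (simp add: F_def)
qed


definition isets :: "'a set \<Rightarrow> 'a set set \<Rightarrow> 'a set \<Rightarrow> 'a set set" where
  "isets V E A = {S. A \<subseteq> S \<and> S \<subseteq> V \<and> induced_edges E S = {}}"

lemma finite_isets: "finite V \<Longrightarrow> finite (isets V E A)"
  unfolding isets_def by (rule finite_subset[of _ "Pow V"]) auto

lemma finite_wpc: "finite V \<Longrightarrow> finite C \<Longrightarrow> finite (wpc V E C)"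
  unfolding wpc_def by (rule finite_subset[of _ "V \<rightarrow>\<^sub>E C"]) (auto intro: finite_PiE)

lemma decomp:
  assumes hyp: "hypergraph V E" and wA: "w \<in> A" and AV: "A \<subseteq> V" and C: "finite C"
  shows "card {\<phi> \<in> wpc V E C. \<forall>a\<in>A. \<phi> a = \<phi> w}
         = card C * (\<Sum>S\<in>isets V E A. chrom_count (V-S) (induced_edges E (V-S)) (card C - 1))"
proof -
  define X where "X = {\<phi> \<in> wpc V E C. \<forall>a\<in>A. \<phi> a = \<phi> w}"
  define fib where "fib = (\<lambda>(c,S). {\<phi>\<in>X. \<phi> w = c \<and> {v\<in>V. \<phi> v = c} = S})"
  have EV: "\<forall>e\<in>E. e \<subseteq> V \<and> e \<noteq> {}" and finV: "finite V" using hyp by (auto simp: hypergraph_def)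
  have finI: "finite (isets V E A)" using finV by (rule finite_isets)
  have XU: "X = \<Union> (fib ` (C \<times> isets V E A))"
  proof
    show "X \<subseteq> \<Union> (fib ` (C \<times> isets V E A))"
    proof
      fix \<phi> assume ph: "\<phi> \<in> X"
      then have pi: "\<phi> \<in> V \<rightarrow>\<^sub>E C" and pr: "\<forall>e\<in>E. 1 < card (\<phi> ` e)" and cA: "\<forall>a\<in>A. \<phi> a = \<phi> w"
        by (auto simp: X_def wpc_def)
      define S where "S = {v\<in>V. \<phi> v = \<phi> w}"
      have "\<phi> w \<in> C" using pi wA AV by auto
      moreover have "S \<in> isets V E A"
      proof -
        have "A \<subseteq> S" using cA AV by (auto simp: S_def)
        moreover have "induced_edges E S = {}"
        proof (rule ccontr)
          assume "induced_edges E S \<noteq> {}"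
          then obtain e where e: "e \<in> E" "e \<subseteq> S" by (auto simp: induced_edges_def)
          then have "\<phi> ` e \<subseteq> {\<phi> w}" by (auto simp: S_def)
          then have "card (\<phi> ` e) \<le> card {\<phi> w}" by (intro card_mono) auto
          then show False using pr e by auto
        qed
        ultimately show ?thesis by (auto simp: isets_def S_def)
      qed
      moreover have "\<phi> \<in> fib (\<phi> w, S)" using ph by (auto simp: fib_def S_def)
      ultimately show "\<phi> \<in> \<Union> (fib ` (C \<times> isets V E A))" by blast
    qed
    show "\<Union> (fib ` (C \<times> isets V E A)) \<subseteq> X" by (auto simp: fib_def)
  qed
  have finX: "finite X" using finite_wpc[OF finV C] by (auto simp: X_def)
  have "card X = (\<Sum>p\<in>C \<times> isets V E A. card (fib p))"
    unfolding XU
  proof (rule card_UN_disjoint)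
    show "finite (C \<times> isets V E A)" using C finI by simp
    show "\<forall>p\<in>C \<times> isets V E A. finite (fib p)" using finX by (auto simp: fib_def)
    show "\<forall>i\<in>C \<times> isets V E A. \<forall>j\<in>C \<times> isets V E A. i \<noteq> j \<longrightarrow> fib i \<inter> fib j = {}"
      by (auto simp: fib_def)
  qed
  also have "\<dots> = (\<Sum>p\<in>C \<times> isets V E A. chrom_count (V - snd p) (induced_edges E (V - snd p)) (card C - 1))"
  proof (rule sum.cong[OF refl])
    fix p assume p: "p \<in> C \<times> isets V E A"
    obtain c S where cS: "p = (c,S)" by fastforce
    have "card (fib (c,S)) = chrom_count (V - S) (induced_edges E (V - S)) (card C - 1)"
      unfolding fib_def X_def using fibre_card[OF hyp wA _ _ C(1), of S c] p cS
      by (auto simp: isets_def conj_assoc)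
    then show "card (fib p) = chrom_count (V - snd p) (induced_edges E (V - snd p)) (card C - 1)"
      using cS by simp
  qed
  also have "\<dots> = (\<Sum>c\<in>C. \<Sum>S\<in>isets V E A. chrom_count (V - S) (induced_edges E (V - S)) (card C - 1))"
    using sum.cartesian_product[of "\<lambda>c S. chrom_count (V - S) (induced_edges E (V - S)) (card C - 1)" "isets V E A" C]
    by (simp add: split_def)
  also have "\<dots> = card C * (\<Sum>S\<in>isets V E A. chrom_count (V-S) (induced_edges E (V-S)) (card C - 1))"
    by simp
  finally show ?thesis by (simp add: X_def)
qed


lemma poly_nat_unique:
  fixes p q :: "int poly"
  assumes "\<And>n. poly p (of_nat n) = poly q (of_nat n)"
  shows "p = q"
proof (rule ccontr)
  assume "p \<noteq> q"
  then have "p - q \<noteq> 0" by simp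
  then have fin: "finite {x. poly (p - q) x = 0}" by (rule poly_roots_finite)
  have "range (of_nat :: nat \<Rightarrow> int) \<subseteq> {x. poly (p - q) x = 0}" using assms by auto
  then have "finite (range (of_nat :: nat \<Rightarrow> int))" using fin finite_subset by blast
  moreover have "inj (of_nat :: nat \<Rightarrow> int)" by (simp add: inj_on_def)
  ultimately show False using finite_imageD by fastforce
qed

lemma hyp_induced: "hypergraph V E \<Longrightarrow> X \<subseteq> V \<Longrightarrow> hypergraph X (induced_edges E X)"
  by (auto simp: hypergraph_def induced_edges_def intro: finite_subset)

lemma count_zero: assumes "V \<noteq> {}" shows "chrom_count V E 0 = 0"
proof -
  obtain v where "v \<in> V" using assms by auto
  then have "wpc V E ({}::nat set) = {}" by (force simp: wpc_def PiE_def Pi_def)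
  then show ?thesis by (simp add: chrom_count_wpc)
qed

lemma count_empty: assumes "hypergraph {} E" shows "chrom_count {} E n = 1"
proof -
  have "E = {}" using assms by (auto simp: hypergraph_def)
  then show ?thesis by (simp add: chrom_count_wpc wpc_def)
qed

lemma rec_count:
  assumes hyp: "hypergraph V E" and wA: "w \<in> A" and AV: "A \<subseteq> V"
  shows "card {\<phi> \<in> wpc V E {1..Suc n}. \<forall>a\<in>A. \<phi> a = \<phi> w}
         = Suc n * (\<Sum>S\<in>isets V E A. chrom_count (V-S) (induced_edges E (V-S)) n)"
  using decomp[OF hyp wA AV, of "{1..Suc n}"] by simp

lemma poly_exists:
  "hypergraph V E \<Longrightarrow> \<exists>p. \<forall>n. poly p (of_nat n) = (of_nat (chrom_count V E n) :: int)"
proof (induction "card V" arbitrary: V E rule: less_induct)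
  case less
  show ?case
  proof (cases "V = {}")
    case True
    then show ?thesis using count_empty less.prems by (intro exI[of _ 1]) auto
  next
    case False
    then obtain w where w: "w \<in> V" by auto
    have finV: "finite V" using less.prems by (simp add: hypergraph_def)
    have "\<forall>S\<in>isets V E {w}. \<exists>q. \<forall>n. poly q (of_nat n) = (of_nat (chrom_count (V-S) (induced_edges E (V-S)) n) :: int)"
    proof
      fix S assume S: "S \<in> isets V E {w}"
      then have "w \<in> S" "S \<subseteq> V" by (auto simp: isets_def)
      then have "V - S \<subset> V" using w by auto
      then have "card (V - S) < card V" using finV by (rule psubset_card_mono[rotated])
      then show "\<exists>q. \<forall>n. poly q (of_nat n) = (of_nat (chrom_count (V-S) (induced_edges E (V-S)) n) :: int)"
        using less.hyps hyp_induced[OF less.prems, of "V - S"] by blast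
    qed
    from bchoice[OF this] obtain q where q0: "\<forall>S\<in>isets V E {w}. \<forall>n. poly (q S) (of_nat n) = (of_nat (chrom_count (V-S) (induced_edges E (V-S)) n) :: int)"
      by blast
    then have q: "\<And>S n. S \<in> isets V E {w} \<Longrightarrow> poly (q S) (of_nat n) = (of_nat (chrom_count (V-S) (induced_edges E (V-S)) n) :: int)"
      by blast
    define p where "p = pcompose ([:1,1:] * (\<Sum>S\<in>isets V E {w}. q S)) [:-1,1:]"
    have "poly p (of_nat n) = of_nat (chrom_count V E n)" for n
    proof (cases n)
      case 0
      then show ?thesis using count_zero[OF False] by (simp add: p_def poly_pcompose)
    next
      case (Suc m)
      have cnt: "chrom_count V E (Suc m) = Suc m * (\<Sum>S\<in>isets V E {w}. chrom_count (V-S) (induced_edges E (V-S)) m)"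
        using rec_count[of V E w "{w}" m] less.prems w by (simp add: chrom_count_wpc)
      have "poly p (of_nat n) = (1 + of_nat m) * (\<Sum>S\<in>isets V E {w}. poly (q S) (of_nat m))"
        using Suc by (simp add: p_def poly_pcompose poly_sum algebra_simps)
      also have "\<dots> = of_nat (chrom_count V E n)"
        using Suc cnt q by (simp add: of_nat_sum algebra_simps)
      finally show ?thesis .
    qed
    then show ?thesis by blast
  qed
qed

lemma chrom_poly_eval:
  assumes "hypergraph V E"
  shows "poly (chrom_poly V E) (of_nat n) = of_nat (chrom_count V E n)"
proof -
  obtain p where p: "\<forall>n. poly p (of_nat n) = (of_nat (chrom_count V E n) :: int)"
    using poly_exists[OF assms] by blast
  have "\<exists>!p. \<forall>n::nat. poly p (of_nat n) = (of_nat (chrom_count V E n) :: int)"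
  proof (rule ex1I[of _ p])
    show "\<forall>n. poly p (of_nat n) = of_nat (chrom_count V E n)" using p .
    fix r assume "\<forall>n::nat. poly r (of_nat n) = (of_nat (chrom_count V E n) :: int)"
    then show "r = p" using p by (intro poly_nat_unique) auto
  qed
  then have "\<forall>n::nat. poly (chrom_poly V E) (of_nat n) = (of_nat (chrom_count V E n) :: int)"
    unfolding chrom_poly_def by (rule theI')
  then show ?thesis by blast
qed

lemma shift_identity:
  assumes hyp: "hypergraph V E" and wA: "w \<in> A" and AV: "A \<subseteq> V"
    and Q: "\<And>n. poly Q (of_nat n) = of_nat (card {\<phi> \<in> wpc V E {1..n}. \<forall>a\<in>A. \<phi> a = \<phi> w})"
  shows "pcompose Q [:1,1:] = [:1,1:] * (\<Sum>S\<in>isets V E A. chrom_poly (V-S) (induced_edges E (V-S)))"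
proof (rule poly_nat_unique)
  fix n
  have ind: "S \<in> isets V E A \<Longrightarrow> hypergraph (V-S) (induced_edges E (V-S))" for S
    using hyp_induced[OF hyp] by auto
  have "poly (pcompose Q [:1,1:]) (of_nat n) = poly Q (of_nat (Suc n))" by (simp add: poly_pcompose)
  also have "\<dots> = of_nat (card {\<phi> \<in> wpc V E {1..Suc n}. \<forall>a\<in>A. \<phi> a = \<phi> w})"
    by (rule Q)
  also have "\<dots> = of_nat (Suc n * (\<Sum>S\<in>isets V E A. chrom_count (V-S) (induced_edges E (V-S)) n))"
    by (simp only: rec_count[OF hyp wA AV])
  also have "\<dots> = poly ([:1,1:] * (\<Sum>S\<in>isets V E A. chrom_poly (V-S) (induced_edges E (V-S)))) (of_nat n)"
    by (simp add: poly_sum of_nat_sum chrom_poly_eval ind)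
  finally show "poly (pcompose Q [:1,1:]) (of_nat n) = poly ([:1,1:] * (\<Sum>S\<in>isets V E A. chrom_poly (V-S) (induced_edges E (V-S)))) (of_nat n)" .
qed


lemma x2_dvd_iff: "([:0,1:]^2 dvd (p::int poly)) \<longleftrightarrow> coeff p 0 = 0 \<and> coeff p 1 = 0"
proof
  assume "[:0,1:]^2 dvd p"
  then obtain k where "p = [:0,1:]^2 * k" by (auto elim: dvdE)
  then show "coeff p 0 = 0 \<and> coeff p 1 = 0" by (simp add: power2_eq_square coeff_pCons)
next
  assume c: "coeff p 0 = 0 \<and> coeff p 1 = 0"
  obtain a p' where p: "p = pCons a p'" by (cases p) auto
  obtain b p'' where p': "p' = pCons b p''" by (cases p') auto
  have "a = 0" "b = 0" using c p p' by auto
  then have "p = [:0,1:]^2 * p''" using p p' by (simp add: power2_eq_square)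
  then show "[:0,1:]^2 dvd p" by simp
qed

lemma x2_mult_iff: "([:0,1:]^2 dvd [:1,1:] * (q::int poly)) \<longleftrightarrow> [:0,1:]^2 dvd q"
  by (auto simp add: x2_dvd_iff coeff_pCons)

lemma x_dvd_of_zero: "poly (p::int poly) 0 = 0 \<Longrightarrow> [:0,1:] dvd p"
  using poly_eq_0_iff_dvd[of p 0] by simp

lemma shift_dvd: "([:-1,1:]^2 dvd (p::int poly)) \<longleftrightarrow> [:0,1:]^2 dvd pcompose p [:1,1:]"
proof
  assume "[:-1,1:]^2 dvd p"
  then obtain k where k: "p = [:-1,1:]^2 * k" by (auto elim: dvdE)
  have a: "pcompose [:-1,1:] [:1,1:] = [:0,1::int:]" by (simp add: pcompose_pCons)
  have "pcompose p [:1,1:] = pcompose [:-1,1:] [:1,1:] * pcompose [:-1,1:] [:1,1:] * pcompose k [:1,1:]"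
    using k by (simp only: power2_eq_square pcompose_mult)
  then have "pcompose p [:1,1:] = [:0,1:]^2 * pcompose k [:1,1:]"
    by (simp only: a power2_eq_square)
  then show "[:0,1:]^2 dvd pcompose p [:1,1:]" by simp
next
  assume "[:0,1:]^2 dvd pcompose p [:1,1:]"
  then obtain k where k: "pcompose p [:1,1:] = [:0,1:]^2 * k" by (auto elim: dvdE)
  have "p = pcompose (pcompose p [:1,1:]) [:-1,1:]"
    by (simp add: pcompose_assoc[symmetric] pcompose_pCons)
  also have "\<dots> = pcompose [:0,1:] [:-1,1:] * pcompose [:0,1:] [:-1,1:] * pcompose k [:-1,1:]"
    unfolding k by (simp only: power2_eq_square pcompose_mult)
  also have "\<dots> = [:-1,1:]^2 * pcompose k [:-1,1:]"
    by (simp add: pcompose_pCons power2_eq_square)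
  finally show "[:-1,1:]^2 dvd p" by simp
qed


lemma rel_image1:
  assumes "\<forall>v\<in>V-V1. \<psi> (Some v) = \<phi> v" "e \<subseteq> V" "e \<inter> V1 = {}"
  shows "\<psi> ` (Some ` e) = \<phi> ` e"
  using assms by (force simp: image_iff)

lemma rel_image2:
  assumes "\<forall>v\<in>V-V1. \<psi> (Some v) = \<phi> v" "\<forall>v\<in>V1. \<phi> v = \<psi> None" "e \<subseteq> V" "e \<inter> V1 \<noteq> {}"
  shows "\<psi> ` (Some ` (e - V1) \<union> {None}) = \<phi> ` e"
proof -
  obtain a where a: "a \<in> e" "a \<in> V1" using assms(4) by auto
  have "\<psi> ` (Some ` (e - V1)) = \<phi> ` (e - V1)" using assms(1,3) by (force simp: image_iff)
  moreover have "\<psi> None = \<phi> a" using assms(2) a by simp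
  then have "\<phi> ` e = \<phi> ` (e - V1) \<union> {\<psi> None}" using assms(2) a by force
  ultimately show ?thesis by auto
qed

lemma hyp_contract:
  assumes "hypergraph V E" "V1 \<subseteq> V"
  shows "hypergraph (contract_V V V1) (contract_E E V1)"
  using assms unfolding hypergraph_def contract_V_def contract_E_def by blast

lemma contract_count:
  assumes hyp: "hypergraph V E" and wV1: "w \<in> V1" and V1V: "V1 \<subseteq> V"
  shows "chrom_count (contract_V V V1) (contract_E E V1) n
         = card {\<phi> \<in> wpc V E {1..n}. \<forall>a\<in>V1. \<phi> a = \<phi> w}"
proof -
  define C where "C = {1..n}"
  define G where "G = wpc (contract_V V V1) (contract_E E V1) C"
  define F where "F = {\<phi> \<in> wpc V E C. \<forall>a\<in>V1. \<phi> a = \<phi> w}"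
  define f where "f = (\<lambda>(\<psi>::'a option \<Rightarrow> nat) v. if v \<in> V1 then \<psi> None else if v \<in> V then \<psi> (Some v) else undefined)"
  define f' where "f' = (\<lambda>(\<phi>::'a \<Rightarrow> nat) (x::'a option). case x of None \<Rightarrow> \<phi> w | Some v \<Rightarrow> if v \<in> V - V1 then \<phi> v else undefined)"
  have EV: "\<forall>e\<in>E. e \<subseteq> V" using hyp by (auto simp: hypergraph_def)
  have cV: "contract_V V V1 = Some ` (V - V1) \<union> {None}" by (simp add: contract_V_def)
  have "bij_betw f G F"
  proof (rule bij_betw_byWitness[where f'=f'])
    show "\<forall>\<psi>\<in>G. f' (f \<psi>) = \<psi>"
    proof
      fix \<psi> assume "\<psi> \<in> G"
      then have pi: "\<psi> \<in> contract_V V V1 \<rightarrow>\<^sub>E C" by (simp add: G_def wpc_def)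
      show "f' (f \<psi>) = \<psi>"
      proof
        fix x show "f' (f \<psi>) x = \<psi> x"
        proof (cases x)
          case None then show ?thesis using wV1 by (simp add: f'_def f_def)
        next
          case (Some v)
          then show ?thesis using pi unfolding cV by (auto simp: f'_def f_def PiE_def extensional_def)
        qed
      qed
    qed
    show "\<forall>\<phi>\<in>F. f (f' \<phi>) = \<phi>"
    proof
      fix \<phi> assume "\<phi> \<in> F"
      then have pi: "\<phi> \<in> V \<rightarrow>\<^sub>E C" and cst: "\<forall>a\<in>V1. \<phi> a = \<phi> w" by (auto simp: F_def wpc_def)
      show "f (f' \<phi>) = \<phi>"
      proof
        fix v show "f (f' \<phi>) v = \<phi> v"
          using pi cst by (auto simp: f'_def f_def PiE_def extensional_def)
      qed
    qed
    show "f ` G \<subseteq> F"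
    proof clarify
      fix \<psi> assume "\<psi> \<in> G"
      then have pi: "\<psi> \<in> contract_V V V1 \<rightarrow>\<^sub>E C" and pr: "\<forall>e\<in>contract_E E V1. 1 < card (\<psi> ` e)"
        by (auto simp: G_def wpc_def)
      have r1: "\<forall>v\<in>V-V1. \<psi> (Some v) = f \<psi> v" and r2: "\<forall>v\<in>V1. f \<psi> v = \<psi> None"
        using V1V by (auto simp: f_def)
      have "f \<psi> \<in> V \<rightarrow>\<^sub>E C" using pi V1V unfolding cV by (auto simp: f_def PiE_def Pi_def extensional_def)
      moreover have "1 < card (f \<psi> ` e)" if e: "e \<in> E" for e
      proof (cases "e \<inter> V1 = {}")
        case True
        then have "Some ` e \<in> contract_E E V1" using e by (auto simp: contract_E_def)
        then show ?thesis using pr rel_image1[OF r1 _ True] EV e by auto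
      next
        case False
        then have "Some ` (e - V1) \<union> {None} \<in> contract_E E V1" using e by (auto simp: contract_E_def)
        then show ?thesis using pr rel_image2[OF r1 r2 _ False] EV e by auto
      qed
      moreover have "\<forall>a\<in>V1. f \<psi> a = f \<psi> w" using wV1 by (simp add: f_def)
      ultimately show "f \<psi> \<in> F" by (simp add: F_def wpc_def)
    qed
    show "f' ` F \<subseteq> G"
    proof clarify
      fix \<phi> assume "\<phi> \<in> F"
      then have pi: "\<phi> \<in> V \<rightarrow>\<^sub>E C" and cst: "\<forall>a\<in>V1. \<phi> a = \<phi> w"
        and pr: "\<forall>e\<in>E. 1 < card (\<phi> ` e)" by (auto simp: F_def wpc_def)
      have r1: "\<forall>v\<in>V-V1. f' \<phi> (Some v) = \<phi> v" and r2: "\<forall>v\<in>V1. \<phi> v = f' \<phi> None"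
        using cst by (auto simp: f'_def)
      have "f' \<phi> \<in> contract_V V V1 \<rightarrow>\<^sub>E C"
      proof -
        have "f' \<phi> x \<in> C" if "x \<in> contract_V V V1" for x
          using that pi wV1 V1V unfolding cV by (auto simp: f'_def)
        moreover have "f' \<phi> x = undefined" if "x \<notin> contract_V V V1" for x
          using that unfolding cV by (cases x) (auto simp: f'_def)
        ultimately show ?thesis by (auto simp: PiE_def extensional_def)
      qed
      moreover have "1 < card (f' \<phi> ` ce)" if ce: "ce \<in> contract_E E V1" for ce
      proof -
        from ce consider (a) e where "e \<in> E" "e \<inter> V1 = {}" "ce = Some ` e"
          | (b) e where "e \<in> E" "e \<inter> V1 \<noteq> {}" "ce = Some ` (e - V1) \<union> {None}"
          unfolding contract_E_def by blast
        then show ?thesis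
        proof cases
          case a then show ?thesis using pr rel_image1[OF r1] EV by auto
        next
          case b then show ?thesis using pr rel_image2[OF r1 r2] EV by auto
        qed
      qed
      ultimately show "f' \<phi> \<in> G" by (simp add: G_def wpc_def)
    qed
  qed
  then have "card G = card F" by (rule bij_betw_same_card)
  then show ?thesis by (simp add: G_def F_def C_def chrom_count_wpc)
qed


lemma count_mult:
  assumes hyp: "hypergraph V E" and XY: "X \<union> Y = V" "X \<inter> Y = {}"
    and sp: "\<forall>e\<in>E. e \<subseteq> X \<or> e \<subseteq> Y"
  shows "chrom_count V E n = chrom_count X (induced_edges E X) n * chrom_count Y (induced_edges E Y) n"
proof -
  define C where "C = {1..n}"
  define G where "G = wpc X (induced_edges E X) C \<times> wpc Y (induced_edges E Y) C"
  have "bij_betw (\<lambda>\<phi>. (restrict \<phi> X, restrict \<phi> Y)) (wpc V E C) G"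
  proof (rule bij_betw_byWitness[where f'="\<lambda>(a,b) v. if v \<in> X then a v else b v"])
    show "\<forall>\<phi>\<in>wpc V E C. (\<lambda>(a,b) v. if v \<in> X then a v else b v) (restrict \<phi> X, restrict \<phi> Y) = \<phi>"
    proof
      fix \<phi> assume "\<phi> \<in> wpc V E C"
      then have pi: "\<phi> \<in> V \<rightarrow>\<^sub>E C" by (simp add: wpc_def)
      show "(\<lambda>(a,b) v. if v \<in> X then a v else b v) (restrict \<phi> X, restrict \<phi> Y) = \<phi>"
      proof
        fix v show "(\<lambda>(a,b) v. if v \<in> X then a v else b v) (restrict \<phi> X, restrict \<phi> Y) v = \<phi> v"
          using pi XY by (auto simp: PiE_def extensional_def)
      qed
    qed
    show "\<forall>p\<in>G. (\<lambda>\<phi>. (restrict \<phi> X, restrict \<phi> Y)) ((\<lambda>(a,b) v. if v \<in> X then a v else b v) p) = p"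
    proof
      fix p assume "p \<in> G"
      then obtain a b where p: "p = (a,b)" and a: "a \<in> X \<rightarrow>\<^sub>E C" and b: "b \<in> Y \<rightarrow>\<^sub>E C"
        by (auto simp: G_def wpc_def)
      have "restrict (\<lambda>v. if v \<in> X then a v else b v) X = a"
        using a by (auto simp: PiE_def extensional_def fun_eq_iff)
      moreover have "restrict (\<lambda>v. if v \<in> X then a v else b v) Y = b"
        using b XY by (auto simp: PiE_def extensional_def fun_eq_iff)
      ultimately show "(\<lambda>\<phi>. (restrict \<phi> X, restrict \<phi> Y)) ((\<lambda>(a,b) v. if v \<in> X then a v else b v) p) = p"
        using p by simp
    qed
    show "(\<lambda>\<phi>. (restrict \<phi> X, restrict \<phi> Y)) ` wpc V E C \<subseteq> G"
    proof clarify
      fix \<phi> assume "\<phi> \<in> wpc V E C"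
      then have pi: "\<phi> \<in> V \<rightarrow>\<^sub>E C" and pr: "\<forall>e\<in>E. 1 < card (\<phi> ` e)" by (auto simp: wpc_def)
      have "restrict \<phi> Z \<in> wpc Z (induced_edges E Z) C" if "Z \<subseteq> V" for Z
      proof -
        have "restrict \<phi> Z \<in> Z \<rightarrow>\<^sub>E C" using pi that by auto
        moreover have "1 < card (restrict \<phi> Z ` e)" if "e \<in> induced_edges E Z" for e
        proof -
          have "e \<in> E" "e \<subseteq> Z" using that by (auto simp: induced_edges_def)
          moreover then have "restrict \<phi> Z ` e = \<phi> ` e" by auto
          ultimately show ?thesis using pr by auto
        qed
        ultimately show ?thesis by (simp add: wpc_def)
      qed
      then show "(restrict \<phi> X, restrict \<phi> Y) \<in> G" using XY by (auto simp: G_def)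
    qed
    show "(\<lambda>(a,b) v. if v \<in> X then a v else b v) ` G \<subseteq> wpc V E C"
    proof clarify
      fix a b assume "(a,b) \<in> G"
      then have a: "a \<in> X \<rightarrow>\<^sub>E C" and b: "b \<in> Y \<rightarrow>\<^sub>E C"
        and pa: "\<forall>e\<in>induced_edges E X. 1 < card (a ` e)" and pb: "\<forall>e\<in>induced_edges E Y. 1 < card (b ` e)"
        by (auto simp: G_def wpc_def)
      define \<phi> where "\<phi> = (\<lambda>v. if v \<in> X then a v else b v)"
      have "\<phi> \<in> V \<rightarrow>\<^sub>E C" using a b XY by (auto simp: \<phi>_def PiE_def Pi_def extensional_def)
      moreover have "1 < card (\<phi> ` e)" if e: "e \<in> E" for e
      proof (cases "e \<subseteq> X")
        case True
        then have "\<phi> ` e = a ` e" by (auto simp: \<phi>_def)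
        moreover have "e \<in> induced_edges E X" using e True by (simp add: induced_edges_def)
        ultimately show ?thesis using pa by auto
      next
        case False
        then have eY: "e \<subseteq> Y" using sp e by auto
        then have "\<phi> ` e = b ` e" using XY by (auto simp: \<phi>_def)
        moreover have "e \<in> induced_edges E Y" using e eY by (simp add: induced_edges_def)
        ultimately show ?thesis using pb by auto
      qed
      ultimately show "(\<lambda>v. if v \<in> X then a v else b v) \<in> wpc V E C" by (simp add: wpc_def \<phi>_def)
    qed
  qed
  then have "card (wpc V E C) = card G" by (rule bij_betw_same_card)
  then show ?thesis by (simp add: G_def C_def chrom_count_wpc card_cartesian_product)
qed

lemma poly_mult:
  assumes hyp: "hypergraph V E" and XY: "X \<union> Y = V" "X \<inter> Y = {}"
    and sp: "\<forall>e\<in>E. e \<subseteq> X \<or> e \<subseteq> Y"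
  shows "chrom_poly V E = chrom_poly X (induced_edges E X) * chrom_poly Y (induced_edges E Y)"
proof (rule poly_nat_unique)
  fix n
  have hX: "hypergraph X (induced_edges E X)" and hY: "hypergraph Y (induced_edges E Y)"
    using hyp_induced[OF hyp] XY by auto
  show "poly (chrom_poly V E) (of_nat n) = poly (chrom_poly X (induced_edges E X) * chrom_poly Y (induced_edges E Y)) (of_nat n)"
    using count_mult[OF assms, of n] by (simp add: chrom_poly_eval hyp hX hY)
qed

lemma x_dvd_nonempty:
  assumes "hypergraph V E" "V \<noteq> {}"
  shows "[:0,1:] dvd chrom_poly V E"
  using chrom_poly_eval[OF assms(1), of 0] count_zero[OF assms(2)] by (intro x_dvd_of_zero) simp

lemma main_equiv:
  assumes hyp: "hypergraph V E" and w: "w \<in> V"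
  shows "[:-1,1:]^2 dvd chrom_poly V E \<longleftrightarrow>
         [:0,1:]^2 dvd (\<Sum>S\<in>isets V E {w}. chrom_poly (V-S) (induced_edges E (V-S)))"
proof -
  have "pcompose (chrom_poly V E) [:1,1:] = [:1,1:] * (\<Sum>S\<in>isets V E {w}. chrom_poly (V-S) (induced_edges E (V-S)))"
    by (rule shift_identity[OF hyp _ _]) (use w in \<open>auto simp: chrom_poly_eval[OF hyp] chrom_count_wpc\<close>)
  then show ?thesis by (simp only: shift_dvd x2_mult_iff)
qed


lemma part_ii_aux:
  assumes hyp: "hypergraph V E" and w: "w \<in> V" and V1V: "V1 \<subseteq> V" and V2V: "V2 \<subseteq> V"
    and U: "V1 \<union> V2 = V" and I: "V1 \<inter> V2 = {w}"
    and sp: "\<forall>e\<in>E. w \<in> e \<or> e \<subseteq> V1 \<or> e \<subseteq> V2"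
    and e2: "e2 \<in> E" "e2 \<subseteq> V2"
  shows "[:-1,1:]^2 dvd chrom_poly V E \<longleftrightarrow>
         (V1 \<in> indep_sets V E \<longrightarrow> [:-1,1:]^2 dvd chrom_poly (contract_V V V1) (contract_E E V1))"
proof -
  define f where "f = (\<lambda>S. chrom_poly (V-S) (induced_edges E (V-S)))"
  define Is where "Is = isets V E {w}"
  have finV: "finite V" using hyp by (simp add: hypergraph_def)
  have wV1: "w \<in> V1" using I by auto
  have sum_split: "sum f Is = sum f (Is \<inter> {S. V1 \<subseteq> S}) + sum f (Is - {S. V1 \<subseteq> S})"
    by (rule sum.Int_Diff) (simp add: Is_def finite_isets finV)
  have Ib: "[:0,1:]^2 dvd sum f (Is - {S. V1 \<subseteq> S})"
  proof (rule dvd_sum)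
    fix S assume S: "S \<in> Is - {S. V1 \<subseteq> S}"
    then have wS: "w \<in> S" and SV: "S \<subseteq> V" and ind: "induced_edges E S = {}" and n1: "\<not> V1 \<subseteq> S"
      by (auto simp: Is_def isets_def)
    have n2: "\<not> V2 \<subseteq> S"
    proof
      assume "V2 \<subseteq> S"
      then have "e2 \<in> induced_edges E S" using e2 by (auto simp: induced_edges_def)
      then show False using ind by simp
    qed
    have hS: "hypergraph (V-S) (induced_edges E (V-S))" using hyp_induced[OF hyp] by auto
    have XY: "(V1 - S) \<union> (V2 - S) = V - S" "(V1 - S) \<inter> (V2 - S) = {}" using U I wS by auto
    have spl: "\<forall>e\<in>induced_edges E (V-S). e \<subseteq> V1 - S \<or> e \<subseteq> V2 - S"
    proof
      fix e assume "e \<in> induced_edges E (V-S)"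
      then have e: "e \<in> E" "e \<subseteq> V - S" by (auto simp: induced_edges_def)
      then have "w \<notin> e" using wS by auto
      then show "e \<subseteq> V1 - S \<or> e \<subseteq> V2 - S" using sp e by auto
    qed
    have "f S = chrom_poly (V1 - S) (induced_edges (induced_edges E (V-S)) (V1 - S))
              * chrom_poly (V2 - S) (induced_edges (induced_edges E (V-S)) (V2 - S))"
      unfolding f_def by (rule poly_mult[OF hS XY spl])
    moreover have "[:0,1:] dvd chrom_poly (V1 - S) (induced_edges (induced_edges E (V-S)) (V1 - S))"
    proof -
      have sub: "V1 - S \<subseteq> V - S" using V1V by auto
      have ne: "V1 - S \<noteq> {}" using n1 by auto
      show ?thesis by (rule x_dvd_nonempty[OF hyp_induced[OF hS sub] ne])
    qed
    moreover have "[:0,1:] dvd chrom_poly (V2 - S) (induced_edges (induced_edges E (V-S)) (V2 - S))"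
    proof -
      have sub: "V2 - S \<subseteq> V - S" using V2V by auto
      have ne: "V2 - S \<noteq> {}" using n2 by auto
      show ?thesis by (rule x_dvd_nonempty[OF hyp_induced[OF hS sub] ne])
    qed
    ultimately have "[:0,1:] * [:0,1:] dvd f S" using mult_dvd_mono by metis
    then show "[:0,1:]^2 dvd f S" by (simp only: power2_eq_square)
  qed
  have eq1: "[:-1,1:]^2 dvd chrom_poly V E \<longleftrightarrow> [:0,1:]^2 dvd sum f (Is \<inter> {S. V1 \<subseteq> S})"
  proof -
    have sf: "(\<Sum>S\<in>isets V E {w}. chrom_poly (V-S) (induced_edges E (V-S))) = sum f Is"
      by (simp add: f_def Is_def)
    have "[:-1,1:]^2 dvd chrom_poly V E \<longleftrightarrow> [:0,1:]^2 dvd sum f Is"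
      using main_equiv[OF hyp w] sf by simp
    also have "\<dots> \<longleftrightarrow> [:0,1:]^2 dvd sum f (Is \<inter> {S. V1 \<subseteq> S}) + sum f (Is - {S. V1 \<subseteq> S})"
      using sum_split by simp
    also have "\<dots> \<longleftrightarrow> [:0,1:]^2 dvd sum f (Is \<inter> {S. V1 \<subseteq> S})"
      using Ib by (rule dvd_add_left_iff)
    finally show ?thesis .
  qed
  have IsA: "Is \<inter> {S. V1 \<subseteq> S} = isets V E V1" using wV1 by (auto simp: Is_def isets_def)
  show ?thesis
  proof (cases "V1 \<in> indep_sets V E")
    case False
    then obtain e1 where e1: "e1 \<in> E" "e1 \<subseteq> V1" using V1V by (auto simp: indep_sets_def induced_edges_def)
    have "isets V E V1 = {}"
    proof (rule ccontr)
      assume "isets V E V1 \<noteq> {}"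
      then obtain S where "V1 \<subseteq> S" "induced_edges E S = {}" by (auto simp: isets_def)
      then show False using e1 by (auto simp: induced_edges_def)
    qed
    then show ?thesis using eq1 IsA False by simp
  next
    case True
    have hc: "hypergraph (contract_V V V1) (contract_E E V1)" by (rule hyp_contract[OF hyp V1V])
    have "pcompose (chrom_poly (contract_V V V1) (contract_E E V1)) [:1,1:] = [:1,1:] * sum f (isets V E V1)"
      unfolding f_def
      by (rule shift_identity[OF hyp wV1 V1V]) (simp add: chrom_poly_eval[OF hc] contract_count[OF hyp wV1 V1V])
    then have "[:-1,1:]^2 dvd chrom_poly (contract_V V V1) (contract_E E V1) \<longleftrightarrow> [:0,1:]^2 dvd sum f (isets V E V1)"
      by (simp only: shift_dvd x2_mult_iff)
    then show ?thesis using eq1 IsA True by simp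
  qed
qed

lemma edgeless_poly:
  assumes "finite X"
  shows "chrom_poly X {} = [:0,1:]^card X"
proof (rule poly_nat_unique)
  fix n
  have h: "hypergraph X {}" using assms by (simp add: hypergraph_def)
  have "chrom_count X {} n = n ^ card X"
    using assms by (simp add: chrom_count_wpc wpc_def card_PiE)
  then show "poly (chrom_poly X {}) (of_nat n) = poly ([:0,1:]^card X) (of_nat n)"
    by (simp add: chrom_poly_eval[OF h])
qed

lemma coeff_xpow: "coeff ([:0,1:]^k :: int poly) j = (if j = k then 1 else 0)"
proof (induction k arbitrary: j)
  case 0 then show ?case by (simp add: coeff_1)
next
  case (Suc k)
  have "([:0,1:]^Suc k :: int poly) = pCons 0 ([:0,1:]^k)" by simp
  then show ?case using Suc by (cases j) (auto simp: coeff_pCons)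
qed

lemma part_i:
  assumes hyp: "hypergraph V E" and En: "E \<noteq> {}" and u: "u \<in> core V E"
  shows "[:-1,1:]^2 dvd chrom_poly V E \<longleftrightarrow> card (core V E) = 1"
proof -
  have finV: "finite V" and EV: "\<forall>e\<in>E. e \<subseteq> V" using hyp by (auto simp: hypergraph_def)
  have uV: "u \<in> V" and ue: "\<forall>e\<in>E. u \<in> e" using u by (auto simp: core_def)
  define Is where "Is = isets V E {u}"
  define k where "k = (\<lambda>S. card (V - S))"
  have finI: "finite Is" unfolding Is_def using finV by (rule finite_isets)
  have fS: "chrom_poly (V-S) (induced_edges E (V-S)) = [:0,1:]^k S" if "S \<in> Is" for S
  proof -
    have "induced_edges E (V-S) = {}" using that ue by (auto simp: Is_def isets_def induced_edges_def)
    then show ?thesis using finV by (simp add: k_def edgeless_poly)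
  qed
  have eq: "[:-1,1:]^2 dvd chrom_poly V E \<longleftrightarrow> [:0,1:]^2 dvd (\<Sum>S\<in>Is. ([:0,1:]::int poly)^k S)"
  proof -
    have "(\<Sum>S\<in>isets V E {u}. chrom_poly (V-S) (induced_edges E (V-S))) = (\<Sum>S\<in>Is. ([:0,1:]::int poly)^k S)"
      unfolding Is_def[symmetric] by (rule sum.cong[OF refl]) (rule fS)
    then show ?thesis using main_equiv[OF hyp uV] by (simp only:)
  qed
  have k0: "k S \<noteq> 0" if "S \<in> Is" for S
  proof
    assume "k S = 0"
    then have "S = V" using that finV by (auto simp: k_def Is_def isets_def)
    then show False using that En EV by (auto simp: Is_def isets_def induced_edges_def)
  qed
  have k1: "k S = 1 \<longleftrightarrow> (\<exists>v\<in>core V E. v \<noteq> u \<and> S = V - {v})" if S: "S \<in> Is" for S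
  proof
    assume "k S = 1"
    then obtain v where v: "V - S = {v}" by (auto simp: k_def card_Suc_eq)
    have SV: "S \<subseteq> V" "u \<in> S" "induced_edges E S = {}" using S by (auto simp: Is_def isets_def)
    have "v \<in> e" if "e \<in> E" for e
    proof (rule ccontr)
      assume nv: "v \<notin> e"
      have "e \<subseteq> S"
      proof
        fix x assume x: "x \<in> e"
        then have "x \<in> V" "x \<noteq> v" using EV that nv by auto
        then show "x \<in> S" using v by auto
      qed
      then show False using SV that by (auto simp: induced_edges_def)
    qed
    moreover have "v \<in> V" "v \<noteq> u" using v SV by auto
    ultimately show "\<exists>v\<in>core V E. v \<noteq> u \<and> S = V - {v}" using v SV
      by (intro bexI[of _ v]) (auto simp: core_def)
  next
    assume "\<exists>v\<in>core V E. v \<noteq> u \<and> S = V - {v}"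
    then obtain v where "v \<in> V" "S = V - {v}" by (auto simp: core_def)
    then show "k S = 1" by (simp add: k_def Diff_Diff_Int)
  qed
  have finC: "finite (core V E)" using finV by (rule finite_subset[rotated]) (auto simp: core_def)
  have c1: "card (core V E) = 1 \<longleftrightarrow> \<not> (\<exists>v\<in>core V E. v \<noteq> u)"
  proof
    assume "card (core V E) = 1"
    then obtain x where "core V E = {x}" by (auto simp: card_Suc_eq)
    then show "\<not> (\<exists>v\<in>core V E. v \<noteq> u)" using u by auto
  next
    assume "\<not> (\<exists>v\<in>core V E. v \<noteq> u)"
    then have "core V E \<subseteq> {u}" by blast
    then have "core V E = {u}" using u by blast
    then show "card (core V E) = 1" by simp
  qed
  show ?thesis
  proof
    assume d: "[:-1,1:]^2 dvd chrom_poly V E"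
    show "card (core V E) = 1"
    proof (rule ccontr)
      assume "card (core V E) \<noteq> 1"
      then obtain v where v: "v \<in> core V E" "v \<noteq> u" using c1 by blast
      define S0 where "S0 = V - {v}"
      have S0: "S0 \<in> Is"
      proof -
        have ve: "\<forall>e\<in>E. v \<in> e" using v(1) by (simp add: core_def)
        have "induced_edges E S0 = {}"
        proof (rule ccontr)
          assume "induced_edges E S0 \<noteq> {}"
          then obtain e where "e \<in> E" "e \<subseteq> S0" unfolding induced_edges_def by blast
          then show False using ve unfolding S0_def by blast
        qed
        moreover have "{u} \<subseteq> S0" "S0 \<subseteq> V" using v(2) uV unfolding S0_def by auto
        ultimately show ?thesis unfolding Is_def isets_def by blast
      qed
      have kS0: "k S0 = 1" using k1[OF S0] v S0_def by blast
      have "coeff (\<Sum>S\<in>Is. ([:0,1:]::int poly)^k S) 1 = (\<Sum>S\<in>Is. if 1 = k S then 1 else 0)"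
        by (simp add: coeff_sum coeff_xpow)
      also have "\<dots> \<ge> (if 1 = k S0 then 1 else 0)"
        by (rule member_le_sum[OF S0]) (auto simp: finI)
      finally have "coeff (\<Sum>S\<in>Is. ([:0,1:]::int poly)^k S) 1 \<noteq> 0" using kS0 by simp
      then show False using d eq x2_dvd_iff by blast
    qed
  next
    assume "card (core V E) = 1"
    then have nc: "\<not> (\<exists>v\<in>core V E. v \<noteq> u)" using c1 by blast
    have "\<forall>S\<in>Is. 2 \<le> k S"
    proof
      fix S assume S: "S \<in> Is"
      have "k S \<noteq> 1" using k1[OF S] nc by blast
      then show "2 \<le> k S" using k0[OF S] by linarith
    qed
    then have "[:0,1:]^2 dvd (\<Sum>S\<in>Is. ([:0,1:]::int poly)^k S)"
      by (intro dvd_sum) (simp add: le_imp_power_dvd)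
    then show "[:-1,1:]^2 dvd chrom_poly V E" using eq by simp
  qed
qed

theorem theorem4:
  fixes V :: "'a set" and E :: "'a set set"
  assumes "hypergraph V E" and "hg_connected V E" and "sperner E" and "card E \<ge> 2"
  shows "(core V E \<noteq> {} \<longrightarrow>
            ([:-1, 1:]^2 dvd chrom_poly V E \<longleftrightarrow> card (core V E) = 1))
       \<and> (\<forall>w V1 V2. core V E = {} \<and> w \<in> V \<and> V1 \<subset> V \<and> V2 \<subset> V \<and> V1 \<union> V2 = V \<and>
            V1 \<inter> V2 = {w} \<and> (\<forall>e\<in>E. w \<in> e \<or> e \<subseteq> V1 \<or> e \<subseteq> V2) \<longrightarrow>
            ([:-1, 1:]^2 dvd chrom_poly V E \<longleftrightarrow>
               (V1 \<notin> indep_sets V E \<and> V2 \<notin> indep_sets V E)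
             \<or> (V1 \<in> indep_sets V E \<and> V2 \<notin> indep_sets V E \<and>
                  [:-1, 1:]^2 dvd chrom_poly (contract_V V V1) (contract_E E V1))
             \<or> (V2 \<in> indep_sets V E \<and> V1 \<notin> indep_sets V E \<and>
                  [:-1, 1:]^2 dvd chrom_poly (contract_V V V2) (contract_E E V2))))"
proof -
  have hyp: "hypergraph V E" using assms(1) .
  have En: "E \<noteq> {}" using assms(4) by auto
  have EV: "\<forall>e\<in>E. e \<subseteq> V" using hyp by (auto simp: hypergraph_def)
  have indep_iff: "X \<in> indep_sets V E \<longleftrightarrow> \<not> (\<exists>e\<in>E. e \<subseteq> X)" if "X \<subseteq> V" for X
    using that by (auto simp: indep_sets_def induced_edges_def)
  show ?thesis
  proof (intro conjI impI allI)
    assume "core V E \<noteq> {}"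
    then obtain u where "u \<in> core V E" by auto
    then show "[:-1, 1:]^2 dvd chrom_poly V E \<longleftrightarrow> card (core V E) = 1"
      by (rule part_i[OF hyp En])
  next
    fix w V1 V2
    assume H: "core V E = {} \<and> w \<in> V \<and> V1 \<subset> V \<and> V2 \<subset> V \<and> V1 \<union> V2 = V \<and>
            V1 \<inter> V2 = {w} \<and> (\<forall>e\<in>E. w \<in> e \<or> e \<subseteq> V1 \<or> e \<subseteq> V2)"
    then have core: "core V E = {}" and w: "w \<in> V" and V1V: "V1 \<subseteq> V" and V2V: "V2 \<subseteq> V"
      and U: "V1 \<union> V2 = V" and I: "V1 \<inter> V2 = {w}" and sp: "\<forall>e\<in>E. w \<in> e \<or> e \<subseteq> V1 \<or> e \<subseteq> V2"
      by auto
    show "[:-1, 1:]^2 dvd chrom_poly V E \<longleftrightarrow>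
               (V1 \<notin> indep_sets V E \<and> V2 \<notin> indep_sets V E)
             \<or> (V1 \<in> indep_sets V E \<and> V2 \<notin> indep_sets V E \<and>
                  [:-1, 1:]^2 dvd chrom_poly (contract_V V V1) (contract_E E V1))
             \<or> (V2 \<in> indep_sets V E \<and> V1 \<notin> indep_sets V E \<and>
                  [:-1, 1:]^2 dvd chrom_poly (contract_V V V2) (contract_E E V2))"
    proof (cases "V2 \<in> indep_sets V E")
      case False
      then obtain e2 where e2: "e2 \<in> E" "e2 \<subseteq> V2" using indep_iff[OF V2V] by blast
      show ?thesis using part_ii_aux[OF hyp w V1V V2V U I sp e2] False by blast
    next
      case True
      have n1: "V1 \<notin> indep_sets V E"
      proof
        assume i1: "V1 \<in> indep_sets V E"
        have "\<forall>e\<in>E. w \<in> e" using sp indep_iff[OF V1V] indep_iff[OF V2V] i1 True by blast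
        then have "w \<in> core V E" using w by (simp add: core_def)
        then show False using core by simp
      qed
      then obtain e1 where e1: "e1 \<in> E" "e1 \<subseteq> V1" using indep_iff[OF V1V] by blast
      have U': "V2 \<union> V1 = V" and I': "V2 \<inter> V1 = {w}" using U I by auto
      have sp': "\<forall>e\<in>E. w \<in> e \<or> e \<subseteq> V2 \<or> e \<subseteq> V1" using sp by blast
      show ?thesis using part_ii_aux[OF hyp w V2V V1V U' I' sp' e1] True n1 by blast
    qed
  qed
qed

end
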